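(* Let $\mathcal{K}$ be the convex set of real symmetric positive semi-definite $N\times N$ matrices $W$ with $\operatorname{Tr}W=N$, let $\mathbb{G}=\{G \text{ real symmetric } N\times N: G_{\mu\mu}=1,\ \mu=1,\ldots,N\}$, and let $\mathcal{G}=\mathbb{G}\cap\mathcal{K}$. For a closed face $\mathcal{F}$ of $\mathcal{G}$ let $\overline{\mathcal F}$ be the intersection of all faces of $\mathcal{K}$ containing $\mathcal F$. Then $\overline{\mathcal F}\cap\mathbb{G}=\mathcal{F}$ for every closed face $\mathcal{F}$ of $\mathcal{G}$.
   Context: A face of a convex set $C$ is a convex subset $F\subseteq C$ such that whenever $x\in F$, $y,z\in C$, $0<\alpha<1$ and $x=\alpha y+(1-\alpha)z$, then $y,z\in F$. *)

theory Defs
  imports "HOL-Analysis.Analysis"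
begin

definition psd_matrix :: "real^'n^'n \<Rightarrow> bool" where
  "psd_matrix W \<longleftrightarrow> (\<forall>x::real^'n. 0 \<le> x \<bullet> (W *v x))"

definition Kset :: "(real^'n^'n) set" where
  "Kset = {W. transpose W = W \<and> psd_matrix W \<and> trace W = real CARD('n)}"

definition GGset :: "(real^'n^'n) set" where
  "GGset = {G. transpose G = G \<and> (\<forall>\<mu>. G $ \<mu> $ \<mu> = 1)}"

definition Gset :: "(real^'n^'n) set" where
  "Gset = GGset \<inter> Kset"

definition face_closure_K :: "(real^'n^'n) set \<Rightarrow> (real^'n^'n) set" where
  "face_closure_K F = \<Inter>{E. E face_of Kset \<and> F \<subseteq> E}"

end

theory Submission
  imports Defs
begin

lemma transpose_add': "transpose (A + B) = transpose A + transpose (B::real^'n^'n)"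
  by (simp add: transpose_def vec_eq_iff)

lemma trace_scaleR': "trace (c *\<^sub>R (A::real^'n^'n)) = c * trace A"
  by (simp add: trace_def sum_distrib_left)

lemma convex_Kset: "convex (Kset :: (real^'n^'n) set)"
proof (rule convexI)
  fix A B :: "real^'n^'n" and u v :: real
  assume hA: "A \<in> Kset" and hB: "B \<in> Kset" and huv: "0 \<le> u" "0 \<le> v" "u + v = 1"
  have h: "transpose A = A" "psd_matrix A" "trace A = real CARD('n)"
            "transpose B = B" "psd_matrix B" "trace B = real CARD('n)"
            "0 \<le> u" "0 \<le> v" "u + v = 1"
    using hA hB huv unfolding Kset_def by auto
  show "u *\<^sub>R A + v *\<^sub>R B \<in> Kset"
    unfolding Kset_def mem_Collect_eq
  proof (intro conjI)
  show "transpose (u *\<^sub>R A + v *\<^sub>R B) = u *\<^sub>R A + v *\<^sub>R B"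
    using h by (simp add: transpose_add' transpose_scalar)
  show "trace (u *\<^sub>R A + v *\<^sub>R B) = real CARD('n)"
    using h by (simp add: trace_add trace_scaleR' algebra_simps flip: distrib_right)
  show "psd_matrix (u *\<^sub>R A + v *\<^sub>R B)"
    unfolding psd_matrix_def
  proof
    fix x :: "real^'n"
    have "x \<bullet> ((u *\<^sub>R A + v *\<^sub>R B) *v x) = u * (x \<bullet> (A *v x)) + v * (x \<bullet> (B *v x))"
      by (simp add: matrix_vector_mult_add_rdistrib inner_add_right flip: scaleR_matrix_vector_assoc)
    also have "\<dots> \<ge> 0" using h unfolding psd_matrix_def by simp
    finally show "0 \<le> x \<bullet> ((u *\<^sub>R A + v *\<^sub>R B) *v x)" .
  qed
  qed
qed

lemma affine_GGset: "affine (GGset :: (real^'n^'n) set)"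
  unfolding affine_def GGset_def
  by (auto simp: transpose_add' transpose_scalar simp flip: distrib_right)

theorem lemma2:
  fixes F :: "(real^'n^'n) set"
  assumes "F face_of Gset" and "closed F"
  shows "face_closure_K F \<inter> GGset = F"
proof (cases "F = {}")
  case True
  have "{} face_of (Kset :: (real^'n^'n) set)" by simp
  then have "face_closure_K F = {}" using True unfolding face_closure_K_def by blast
  then show ?thesis using True by simp
next
  case False
  define E where "E = face_closure_K F"
  have FG: "F \<subseteq> Gset" using assms(1) face_of_imp_subset by blast
  have FK: "F \<subseteq> Kset" using FG unfolding Gset_def by blast
  have convF: "convex F" using assms(1) face_of_imp_convex by blast
  have ne: "{E. E face_of Kset \<and> F \<subseteq> E} \<noteq> {}"
    using FK face_of_refl[OF convex_Kset] by blast
  have EK: "E face_of Kset" unfolding E_def face_closure_K_def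
    by (rule face_of_Inter[OF ne]) blast
  have FE: "F \<subseteq> E" unfolding E_def face_closure_K_def by blast
  have minE: "E \<subseteq> E'" if "E' face_of Kset" "F \<subseteq> E'" for E'
    unfolding E_def face_closure_K_def using that by blast
  have convE: "convex E" using EK face_of_imp_convex by blast
  obtain x where xF: "x \<in> rel_interior F"
    using False convF rel_interior_eq_empty by blast
  have xinF: "x \<in> F" using xF rel_interior_subset by blast
  have xE: "x \<in> rel_interior E"
  proof (rule ccontr)
    assume nx: "x \<notin> rel_interior E"
    have xinE: "x \<in> E" using xinF FE by blast
    obtain a where "a \<noteq> 0" and a1: "\<And>y. y \<in> E \<Longrightarrow> a \<bullet> x \<le> a \<bullet> y"
      and a2: "\<And>y. y \<in> rel_interior E \<Longrightarrow> a \<bullet> x < a \<bullet> y"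
      using supporting_hyperplane_rel_boundary[OF convE xinE nx] by metis
    define E' where "E' = E \<inter> {y. a \<bullet> y = a \<bullet> x}"
    have "E' face_of E" unfolding E'_def
      by (rule face_of_Int_supporting_hyperplane_ge[OF convE]) (use a1 in auto)
    then have E'K: "E' face_of Kset" using EK face_of_trans by blast
    have "x \<in> E'" unfolding E'_def using xinF FE by blast
    then have "E' \<inter> rel_interior F \<noteq> {}" using xF by blast
    then have "F \<subseteq> E'"
      by (rule subset_of_face_of[OF \<open>E' face_of E\<close> FE])
    then have "E \<subseteq> E'" using minE E'K by blast
    moreover obtain w where "w \<in> rel_interior E"
      using convE FE xinF rel_interior_eq_empty by blast
    ultimately have "w \<in> E'" using rel_interior_subset by blast
    then have "a \<bullet> w = a \<bullet> x" unfolding E'_def by simp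
    with a2[OF \<open>w \<in> rel_interior E\<close>] show False by simp
  qed
  have "rel_interior (E \<inter> GGset) = rel_interior E \<inter> rel_interior GGset"
    apply (rule convex_rel_interior_inter_two[OF convE affine_imp_convex[OF affine_GGset]])
    using xE xinF FG rel_interior_affine[OF affine_GGset] unfolding Gset_def by blast
  then have "x \<in> rel_interior (E \<inter> GGset)"
    using xE xinF FG rel_interior_affine[OF affine_GGset] unfolding Gset_def by blast
  moreover have "E \<inter> GGset \<subseteq> Gset"
    using EK face_of_imp_subset unfolding Gset_def by blast
  ultimately have "E \<inter> GGset \<subseteq> F"
    using subset_of_face_of[OF assms(1), of "E \<inter> GGset"] xinF by blast
  moreover have "F \<subseteq> E \<inter> GGset" using FE FG unfolding Gset_def by blast
  ultimately show ?thesis unfolding E_def by blast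
qed

end
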